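(* Let $M$ be a matroid on $E=\{0,\dots,n\}$ with dual matroid $M^\perp$. Then $\operatorname{crem}[\mathcal S_M]=[\mathcal Q_{M^\perp}^\vee]$ and $\operatorname{crem}[\mathcal Q_M]=[\mathcal S_{M^\perp}^\vee]$ in $K_T^0(X_E)$. In particular $\operatorname{crem}\, c(\mathcal S_M,u)=c(\mathcal Q_{M^\perp}^\vee,u)$ and $\operatorname{crem}\, c(\mathcal Q_M,u)=c(\mathcal S_{M^\perp}^\vee,u)$.
   Context: $X_E$ is the permutohedral variety (toric variety of the fan $\Sigma_E$ in $\mathbb R^E/\mathbb R\mathbf 1$ with cones $\operatorname{Cone}(\overline{\mathbf e}_{S_1},\dots,\overline{\mathbf e}_{S_k})$ for chains of nonempty proper subsets), with $T=(\mathbb C^* )^E$-fixed points $p_\sigma$ indexed by permutations $\sigma$ ($p_\sigma$ corresponds to the chain $S_i=\{\sigma(0),\dots,\sigma(i-1)\}$); $K_T^0(X_E)$ embeds in $\prod_\sigma\mathbb Z[T_0^{\pm1},\dots,T_n^{\pm1}]$ by restriction $[\mathcal E]\mapsto([\mathcal E]_\sigma)$. $B_\sigma(M)$ is the lexicographically first basis for the order $\sigma(0)\prec\cdots\prec\sigma(n)$; $[\mathcal S_M]_\sigma=\sum_{i\in B_\sigma(M)}T_i^{-1}$, $[\mathcal Q_M]_\sigma=\sum_{i\notin B_\sigma(M)}T_i^{-1}$; $\vee$ is the dual ($T_i\mapsto T_i^{-1}$), $c(\cdot,u)$ the non-equivariant Chern polynomial. The Cremona involution $\operatorname{crem}:X_E\to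 X_E$ is the toric morphism induced by $x\mapsto -x$ on $\Sigma_E$ (with $t\mapsto t^{-1}$ on tori); it acts on $K_T^0(X_E)$ by $(\operatorname{crem}[\mathcal E])_\sigma=[\mathcal E]_{\overline\sigma}(T_0^{-1},\dots,T_n^{-1})$ where $\overline\sigma(i)=\sigma(n-i)$, and on Chow rings by pullback ($=$ pushforward). *)

theory Defs
  imports Main "HOL-Library.Poly_Mapping" "HOL-Computational_Algebra.Polynomial"
    "HOL-Combinatorics.Permutations"
begin

definition matroid :: "'a set \<Rightarrow> 'a set set \<Rightarrow> bool" where
  "matroid E B \<longleftrightarrow> finite E \<and> B \<noteq> {} \<and> (\<forall>b\<in>B. b \<subseteq> E) \<and>
     (\<forall>b1\<in>B. \<forall>b2\<in>B. \<forall>x\<in>b1 - b2. \<exists>y\<in>b2 - b1. insert y (b1 - {x}) \<in> B)"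

definition matroid_dual :: "'a set \<Rightarrow> 'a set set \<Rightarrow> 'a set set" where
  "matroid_dual E B = (\<lambda>b. E - b) ` B"

text \<open>A permutation sigma of {0..n} induces the total order in which x precedes y
  iff the position inv sigma x is smaller than inv sigma y.  A subset is encoded as the
  increasing list of the positions of its elements; lexicographic comparison of these
  lists (all bases have equal size) is the lexicographic order on bases.\<close>

definition pos_list :: "(nat \<Rightarrow> nat) \<Rightarrow> nat set \<Rightarrow> nat list" where
  "pos_list \<sigma> b = sorted_list_of_set (inv \<sigma> ` b)"

definition lex_first_basis :: "(nat \<Rightarrow> nat) \<Rightarrow> nat set set \<Rightarrow> nat set" where
  "lex_first_basis \<sigma> M = (THE b. b \<in> M \<and>
      (\<forall>b'\<in>M. b' \<noteq> b \<longrightarrow> (pos_list \<sigma> b, pos_list \<sigma> b') \<in> lex less_than))"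

type_synonym laurent = "(nat \<Rightarrow>\<^sub>0 int) \<Rightarrow>\<^sub>0 int"

definition Tpow :: "nat \<Rightarrow> int \<Rightarrow> laurent" where
  "Tpow i k = Poly_Mapping.single (Poly_Mapping.single i k) 1"

definition lflip :: "laurent \<Rightarrow> laurent" where
  "lflip p = (\<Sum>a\<in>Poly_Mapping.keys p. Poly_Mapping.single (- a) (Poly_Mapping.lookup p a))"

text \<open>Elements of K_T^0(X_E), via their restrictions to the fixed points p_sigma.\<close>
type_synonym kclass = "(nat \<Rightarrow> nat) \<Rightarrow> laurent"

definition Keq :: "nat \<Rightarrow> kclass \<Rightarrow> kclass \<Rightarrow> bool" where
  "Keq n F G \<longleftrightarrow> (\<forall>\<sigma>. \<sigma> permutes {0..n} \<longrightarrow> F \<sigma> = G \<sigma>)"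

definition S_class :: "nat \<Rightarrow> nat set set \<Rightarrow> kclass" where
  "S_class n M \<sigma> = (\<Sum>i\<in>lex_first_basis \<sigma> M. Tpow i (-1))"

definition Q_class :: "nat \<Rightarrow> nat set set \<Rightarrow> kclass" where
  "Q_class n M \<sigma> = (\<Sum>i\<in>{0..n} - lex_first_basis \<sigma> M. Tpow i (-1))"

definition kdual :: "kclass \<Rightarrow> kclass" where
  "kdual F \<sigma> = lflip (F \<sigma>)"

definition rev_perm :: "nat \<Rightarrow> (nat \<Rightarrow> nat) \<Rightarrow> (nat \<Rightarrow> nat)" where
  "rev_perm n \<sigma> = (\<lambda>i. if i \<le> n then \<sigma> (n - i) else \<sigma> i)"

definition crem :: "nat \<Rightarrow> kclass \<Rightarrow> kclass" where
  "crem n F \<sigma> = lflip (F (rev_perm n \<sigma>))"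

text \<open>H_T^*(pt) = Z[t_0,...,t_n]; a character T^a has first Chern class sum a_i t_i.\<close>
type_synonym tpoly = "(nat \<Rightarrow>\<^sub>0 nat) \<Rightarrow>\<^sub>0 int"

definition tvar :: "nat \<Rightarrow> tpoly" where
  "tvar i = Poly_Mapping.single (Poly_Mapping.single i 1) 1"

definition char_c1 :: "(nat \<Rightarrow>\<^sub>0 int) \<Rightarrow> tpoly" where
  "char_c1 a = (\<Sum>i\<in>Poly_Mapping.keys a. of_int (Poly_Mapping.lookup a i) * tvar i)"

text \<open>Chern polynomial in u of a T-representation given by its character
  (a Laurent polynomial with nonnegative coefficients).\<close>
definition chernT :: "laurent \<Rightarrow> tpoly poly" where
  "chernT p = (\<Prod>a\<in>Poly_Mapping.keys p. [:1, char_c1 a:] ^ nat (Poly_Mapping.lookup p a))"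

definition chern_class :: "kclass \<Rightarrow> (nat \<Rightarrow> nat) \<Rightarrow> tpoly poly" where
  "chern_class F \<sigma> = chernT (F \<sigma>)"

text \<open>Substitution t_i -> -t_i.\<close>
definition tneg :: "tpoly \<Rightarrow> tpoly" where
  "tneg q = (\<Sum>m\<in>Poly_Mapping.keys q.
      Poly_Mapping.single m ((-1) ^ (\<Sum>i\<in>Poly_Mapping.keys m. Poly_Mapping.lookup m i)
                             * Poly_Mapping.lookup q m))"

definition crem_chow :: "nat \<Rightarrow> ((nat \<Rightarrow> nat) \<Rightarrow> tpoly poly) \<Rightarrow> (nat \<Rightarrow> nat) \<Rightarrow> tpoly poly" where
  "crem_chow n C \<sigma> = map_poly tneg (C (rev_perm n \<sigma>))"

definition Ceq :: "nat \<Rightarrow> ((nat \<Rightarrow> nat) \<Rightarrow> tpoly poly) \<Rightarrow> ((nat \<Rightarrow> nat) \<Rightarrow> tpoly poly) \<Rightarrow> bool" where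
  "Ceq n C D \<longleftrightarrow> (\<forall>\<sigma>. \<sigma> permutes {0..n} \<longrightarrow> C \<sigma> = D \<sigma>)"

end

theory Submission
  imports Defs
begin


definition dg :: "(nat \<Rightarrow>\<^sub>0 nat) \<Rightarrow> nat" where
  "dg m = (\<Sum>i\<in>Poly_Mapping.keys m. Poly_Mapping.lookup m i)"

lemma dg_superset: "finite S \<Longrightarrow> Poly_Mapping.keys m \<subseteq> S \<Longrightarrow> dg m = (\<Sum>i\<in>S. Poly_Mapping.lookup m i)"
  unfolding dg_def by (rule sum.mono_neutral_left) (auto simp: in_keys_iff)

lemma dg_add: "dg (a + b) = dg a + dg b"
proof -
  let ?S = "Poly_Mapping.keys a \<union> Poly_Mapping.keys b"
  have "dg (a + b) = (\<Sum>i\<in>?S. Poly_Mapping.lookup (a+b) i)"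
    by (rule dg_superset) (auto dest: keys_add[THEN subsetD])
  also have "\<dots> = (\<Sum>i\<in>?S. Poly_Mapping.lookup a i) + (\<Sum>i\<in>?S. Poly_Mapping.lookup b i)"
    by (simp add: lookup_add sum.distrib)
  also have "\<dots> = dg a + dg b" by (subst (1 2) dg_superset[where S="?S"]) auto
  finally show ?thesis .
qed

lemma lookup_tneg: "Poly_Mapping.lookup (tneg q) m = (-1) ^ dg m * Poly_Mapping.lookup q m"
proof -
  have "Poly_Mapping.lookup (tneg q) m = (\<Sum>m'\<in>Poly_Mapping.keys q. ((-1) ^ dg m' * Poly_Mapping.lookup q m' when m' = m))"
    unfolding tneg_def dg_def by (simp add: lookup_sum lookup_single)
  also have "\<dots> = (-1) ^ dg m * Poly_Mapping.lookup q m"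
    by (cases "m \<in> Poly_Mapping.keys q") (auto simp: when_def in_keys_iff)
  finally show ?thesis .
qed

lemma tneg_add: "tneg (p + q) = tneg p + tneg q"
  by (rule poly_mapping_eqI) (simp add: lookup_tneg lookup_add algebra_simps)

lemma tneg_0: "tneg 0 = 0"
  by (rule poly_mapping_eqI) (simp add: lookup_tneg)

lemma tneg_sum: "tneg (sum f A) = (\<Sum>x\<in>A. tneg (f x))"
  by (induction A rule: infinite_finite_induct) (auto simp: tneg_0 tneg_add)

lemma tneg_single: "tneg (Poly_Mapping.single m c) = Poly_Mapping.single m ((-1) ^ dg m * c)"
  by (rule poly_mapping_eqI) (simp add: lookup_tneg lookup_single when_def)

lemma pm_expand: "(q::tpoly) = (\<Sum>m\<in>Poly_Mapping.keys q. Poly_Mapping.single m (Poly_Mapping.lookup q m))"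
  by (rule poly_mapping_eqI) (auto simp: lookup_sum lookup_single when_def in_keys_iff)

lemma tneg_mult: "tneg (p * q) = tneg p * tneg q"
proof -
  have "tneg (p * q) = tneg ((\<Sum>m\<in>Poly_Mapping.keys p. Poly_Mapping.single m (Poly_Mapping.lookup p m)) *
            (\<Sum>m\<in>Poly_Mapping.keys q. Poly_Mapping.single m (Poly_Mapping.lookup q m)))"
    by (simp flip: pm_expand)
  also have "\<dots> = (\<Sum>a\<in>Poly_Mapping.keys p. \<Sum>b\<in>Poly_Mapping.keys q.
       tneg (Poly_Mapping.single a (Poly_Mapping.lookup p a)) * tneg (Poly_Mapping.single b (Poly_Mapping.lookup q b)))"
    by (simp add: sum_distrib_left sum_distrib_right tneg_sum mult_single tneg_single dg_add power_add algebra_simps)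
       (subst sum.swap, simp add: add.commute mult.commute)
  also have "\<dots> = tneg p * tneg q"
  proof -
    have "tneg p * tneg q = tneg (\<Sum>m\<in>Poly_Mapping.keys p. Poly_Mapping.single m (Poly_Mapping.lookup p m)) *
            tneg (\<Sum>m\<in>Poly_Mapping.keys q. Poly_Mapping.single m (Poly_Mapping.lookup q m))"
      by (simp flip: pm_expand)
    then show ?thesis by (simp add: sum_distrib_left sum_distrib_right tneg_sum) (rule sum.swap)
  qed
  finally show ?thesis .
qed

lemma tneg_1: "tneg 1 = 1"
proof -
  have "dg 0 = 0" by (simp add: dg_def)
  then show ?thesis by (simp flip: single_one add: tneg_single)
qed

lemma map_poly_tneg_add: "map_poly tneg (p + q) = map_poly tneg p + map_poly tneg q"
  by (rule poly_eqI) (simp add: coeff_map_poly tneg_0 tneg_add)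

lemma map_poly_tneg_mult: "map_poly tneg (p * q) = map_poly tneg p * map_poly tneg q"
proof (induction p)
  case 0 then show ?case by simp
next
  case (pCons a p)
  have "map_poly tneg (pCons a p * q) = map_poly tneg (smult a q + pCons 0 (p * q))" by simp
  also have "\<dots> = smult (tneg a) (map_poly tneg q) + pCons 0 (map_poly tneg p * map_poly tneg q)"
    by (simp add: map_poly_tneg_add map_poly_smult tneg_mult map_poly_pCons tneg_0 pCons.IH)
  also have "\<dots> = map_poly tneg (pCons a p) * map_poly tneg q"
    by (simp add: map_poly_pCons tneg_0)
  finally show ?case .
qed

lemma map_poly_tneg_prod: "map_poly tneg (\<Prod>x\<in>A. f x) = (\<Prod>x\<in>A. map_poly tneg (f x))"
  by (induction A rule: infinite_finite_induct) (auto simp: map_poly_tneg_mult tneg_1)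



lemma bases_card:
  assumes M: "matroid E M"
  shows "b1 \<in> M \<Longrightarrow> b2 \<in> M \<Longrightarrow> card b1 = card b2"
proof (induction "card (b1 - b2)" arbitrary: b1 rule: nat_less_induct)
  case 1
  have fin: "finite E" and sub: "\<And>b. b \<in> M \<Longrightarrow> b \<subseteq> E"
    and ex: "\<And>b1 b2 x. b1 \<in> M \<Longrightarrow> b2 \<in> M \<Longrightarrow> x \<in> b1 - b2 \<Longrightarrow> \<exists>y\<in>b2 - b1. insert y (b1 - {x}) \<in> M"
    using M unfolding matroid_def by blast+
  have fb1: "finite b1" using sub[OF 1(2)] fin finite_subset by blast
  have fb2: "finite b2" using sub[OF 1(3)] fin finite_subset by blast
  show ?case
  proof (cases "b1 - b2 = {}")
    case True
    have "b2 - b1 = {}"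
    proof (rule ccontr)
      assume "b2 - b1 \<noteq> {}"
      then obtain x where "x \<in> b2 - b1" by blast
      from ex[OF 1(3) 1(2) this] True show False by blast
    qed
    with True have "b1 = b2" by blast
    then show ?thesis by simp
  next
    case False
    then obtain x where x: "x \<in> b1 - b2" by blast
    from ex[OF 1(2) 1(3) x] obtain y where y: "y \<in> b2 - b1" and b3: "insert y (b1 - {x}) \<in> M" by blast
    let ?b3 = "insert y (b1 - {x})"
    have "?b3 - b2 = (b1 - b2) - {x}" using x y by blast
    then have "card (?b3 - b2) < card (b1 - b2)" using x fb1
      by (metis card_Diff1_less finite_Diff)
    with 1(1) b3 1(3) have "card ?b3 = card b2" by blast
    moreover have "card ?b3 = card b1" using x y fb1
    proof -
      have "card ?b3 = Suc (card (b1 - {x}))" using y fb1 by (intro card_insert_disjoint) auto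
      also have "\<dots> = Suc (card b1 - 1)" using x by (simp add: card_Diff_singleton)
      also have "\<dots> = card b1" using x fb1 card_gt_0_iff by (metis Diff_iff Suc_diff_1 empty_iff)
      finally show ?thesis .
    qed
    ultimately show ?thesis by simp
  qed
qed

lemma sum_pow2_less: "(\<Sum>i<k. (2::nat)^i) < 2^k"
  by (induction k) auto

lemma W_less:
  fixes p :: "'a \<Rightarrow> nat"
  assumes fA: "finite A" and fB: "finite B" and inj: "inj_on p (A \<union> B)"
    and z: "z \<in> A - B" and lt: "\<forall>x\<in>B - A. p x < p z"
  shows "(\<Sum>x\<in>B. (2::nat) ^ p x) < (\<Sum>x\<in>A. 2 ^ p x)"
proof -
  have "(\<Sum>x\<in>B - A. (2::nat) ^ p x) = (\<Sum>y\<in>p ` (B - A). 2 ^ y)"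
    by (rule sum.reindex[symmetric, unfolded comp_def]) (rule inj_on_subset[OF inj], blast)
  also have "\<dots> \<le> (\<Sum>y<p z. 2 ^ y)"
    by (rule sum_mono2) (use lt in auto)
  also have "\<dots> < 2 ^ p z" by (rule sum_pow2_less)
  also have "\<dots> \<le> (\<Sum>x\<in>A - B. 2 ^ p x)"
    using z fA by (intro member_le_sum) auto
  finally have *: "(\<Sum>x\<in>B - A. (2::nat) ^ p x) < (\<Sum>x\<in>A - B. 2 ^ p x)" .
  have "(\<Sum>x\<in>B. (2::nat) ^ p x) = (\<Sum>x\<in>B \<inter> A. 2 ^ p x) + (\<Sum>x\<in>B - A. 2 ^ p x)"
    by (rule sum.Int_Diff[OF fB])
  moreover have "(\<Sum>x\<in>A. (2::nat) ^ p x) = (\<Sum>x\<in>A \<inter> B. 2 ^ p x) + (\<Sum>x\<in>A - B. 2 ^ p x)"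
    by (rule sum.Int_Diff[OF fA])
  moreover have "B \<inter> A = A \<inter> B" by blast
  ultimately show ?thesis using * by simp
qed

lemma greedy:
  fixes p :: "'a \<Rightarrow> nat"
  assumes M: "matroid E M" and inj: "inj_on p E"
  shows "\<exists>b0\<in>M. \<forall>b'\<in>M. b' \<noteq> b0 \<longrightarrow>
     (\<exists>m\<in>b0 - b'. \<forall>x\<in>b' - b0. p x < p m) \<and> (\<exists>m\<in>b' - b0. \<forall>x\<in>b0 - b'. p m < p x)"
proof -
  have fin: "finite E" and ne: "M \<noteq> {}" and sub: "\<And>b. b \<in> M \<Longrightarrow> b \<subseteq> E"
    and ex: "\<And>b1 b2 x. b1 \<in> M \<Longrightarrow> b2 \<in> M \<Longrightarrow> x \<in> b1 - b2 \<Longrightarrow> \<exists>y\<in>b2 - b1. insert y (b1 - {x}) \<in> M"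
    using M unfolding matroid_def by blast+
  define W where "W b = (\<Sum>x\<in>b. (2::nat) ^ p x)" for b
  have fM: "finite M" using fin sub by (meson Pow_iff finite_Pow_iff finite_subset subsetI)
  have fb: "\<And>b. b \<in> M \<Longrightarrow> finite b" using sub fin finite_subset by blast
  have "Max (W ` M) \<in> W ` M" by (rule Max_in) (use fM ne in auto)
  then obtain b0 where b0: "b0 \<in> M" "W b0 = Max (W ` M)" by (auto simp del: Max_in)
  have maxW: "\<And>b. b \<in> M \<Longrightarrow> W b \<le> W b0" using b0 fM by simp
  have injs: "\<And>A B. A \<in> M \<Longrightarrow> B \<in> M \<Longrightarrow> inj_on p (A \<union> B)"
    using inj sub by (meson Un_least inj_on_subset)
  show ?thesis
  proof (intro bexI[OF _ b0(1)] ballI impI conjI)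
    fix b' assume b': "b' \<in> M" "b' \<noteq> b0"
    define S where "S = (b0 - b') \<union> (b' - b0)"
    have fS: "finite S" "S \<noteq> {}" using fb[OF b'(1)] fb[OF b0(1)] b' unfolding S_def by auto
    have injS: "inj_on p S" using injs[OF b0(1) b'(1)] unfolding S_def by (rule inj_on_subset) blast
    have "Max (p ` S) \<in> p ` S" by (rule Max_in) (use fS in auto)
    then obtain z where z: "z \<in> S" "p z = Max (p ` S)" by (auto simp del: Max_in)
    have zmax: "\<And>x. x \<in> S \<Longrightarrow> x \<noteq> z \<Longrightarrow> p x < p z"
    proof -
      fix x assume "x \<in> S" "x \<noteq> z"
      then have "p x \<le> p z" "p x \<noteq> p z" using z fS injS by (auto simp: inj_on_def)
      then show "p x < p z" by simp
    qed
    have "Min (p ` S) \<in> p ` S" by (rule Min_in) (use fS in auto)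
    then obtain m where m: "m \<in> S" "p m = Min (p ` S)" by (auto simp del: Min_in)
    have mmin: "\<And>x. x \<in> S \<Longrightarrow> x \<noteq> m \<Longrightarrow> p m < p x"
    proof -
      fix x assume "x \<in> S" "x \<noteq> m"
      then have "p m \<le> p x" "p x \<noteq> p m" using m fS injS by (auto simp: inj_on_def)
      then show "p m < p x" by simp
    qed
    have zin: "z \<in> b0 - b'"
    proof (rule ccontr)
      assume "z \<notin> b0 - b'"
      then have "z \<in> b' - b0" using z unfolding S_def by blast
      then have "W b0 < W b'" unfolding W_def
        by (intro W_less[OF fb[OF b'(1)] fb[OF b0(1)]]) (use injs[OF b'(1) b0(1)] zmax S_def in auto)
      with maxW[OF b'(1)] show False by simp
    qed
    show "\<exists>m\<in>b0 - b'. \<forall>x\<in>b' - b0. p x < p m"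
      using zin zmax unfolding S_def by blast
    have min: "m \<in> b' - b0"
    proof (rule ccontr)
      assume "m \<notin> b' - b0"
      then have mb: "m \<in> b0 - b'" using m unfolding S_def by blast
      from ex[OF b0(1) b'(1) mb] obtain y where y: "y \<in> b' - b0" and b3: "insert y (b0 - {m}) \<in> M" by blast
      have "p m < p y" using mmin[of y] y mb unfolding S_def by blast
      have "W b0 < W (insert y (b0 - {m}))" unfolding W_def
      proof (rule W_less)
        show "finite (insert y (b0 - {m}))" using fb[OF b3] .
        show "finite b0" using fb[OF b0(1)] .
        show "inj_on p (insert y (b0 - {m}) \<union> b0)" using injs[OF b3 b0(1)] .
        show "y \<in> insert y (b0 - {m}) - b0" using y by blast
        show "\<forall>x\<in>b0 - insert y (b0 - {m}). p x < p y" using \<open>p m < p y\<close> by blast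
      qed
      with maxW[OF b3] show False by simp
    qed
    show "\<exists>m\<in>b' - b0. \<forall>x\<in>b0 - b'. p m < p x"
      using min mmin unfolding S_def by blast
  qed
qed

lemma sorted_lex:
  "finite A \<Longrightarrow> finite B \<Longrightarrow> card A = card B \<Longrightarrow> m \<in> A - B \<Longrightarrow> \<forall>x\<in>B - A. m < x \<Longrightarrow>
   (sorted_list_of_set A, sorted_list_of_set B) \<in> lex less_than"
proof (induction "card A" arbitrary: A B)
  case 0
  then show ?case by auto
next
  case (Suc k)
  have ne: "A \<noteq> {}" "B \<noteq> {}" using Suc.hyps(2) Suc.prems by auto
  have LA: "sorted_list_of_set A = Min A # sorted_list_of_set (A - {Min A})"
    using sorted_list_of_set_nonempty Suc.prems ne by blast
  have LB: "sorted_list_of_set B = Min B # sorted_list_of_set (B - {Min B})"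
    using sorted_list_of_set_nonempty Suc.prems ne by blast
  have len: "length (sorted_list_of_set (A - {Min A})) = length (sorted_list_of_set (B - {Min B}))"
    using Suc.prems ne by (simp add: Min_in)
  show ?case
  proof (cases "Min A = Min B")
    case True
    let ?a = "Min A"
    have "m \<noteq> ?a" using Suc.prems ne True Min_in by (metis DiffD2)
    have "(sorted_list_of_set (A - {?a}), sorted_list_of_set (B - {?a})) \<in> lex less_than"
    proof (rule Suc.hyps(1))
      have a1: "?a \<in> A" "?a \<in> B" using Min_in Suc.prems ne True by metis+
      show "k = card (A - {?a})" using a1 Suc.hyps(2) Suc.prems(1) by simp
      show "finite (A - {?a})" "finite (B - {?a})" using Suc.prems by auto
      show "card (A - {?a}) = card (B - {?a})" using a1 Suc.prems by simp
      show "m \<in> A - {?a} - (B - {?a})" using Suc.prems \<open>m \<noteq> ?a\<close> by blast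
      show "\<forall>x\<in>B - {?a} - (A - {?a}). m < x" using Suc.prems by blast
    qed
    then show ?thesis using LA LB True by simp
  next
    case False
    have "Min A < Min B"
    proof (rule ccontr)
      assume "\<not> Min A < Min B"
      then have lt: "Min B < Min A" using False by simp
      have "Min B \<notin> A" using lt Suc.prems(1) by (metis Min_le not_le)
      then have "Min B \<in> B - A" using Min_in Suc.prems ne by blast
      then have "m < Min B" using Suc.prems by blast
      moreover have "Min A \<le> m" using Suc.prems by simp
      ultimately show False using lt by simp
    qed
    then show ?thesis using LA LB len by simp
  qed
qed

lemma image_lex:
  fixes q :: "nat \<Rightarrow> nat"
  assumes fin: "finite E" and inj: "inj_on q E" and b: "b \<subseteq> E" "b' \<subseteq> E" and c: "card b = card b'"
    and m: "m \<in> b - b'" and lt: "\<forall>x\<in>b' - b. q m < q x"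
  shows "(sorted_list_of_set (q ` b), sorted_list_of_set (q ` b')) \<in> lex less_than"
proof (rule sorted_lex)
  have fb: "finite b" "finite b'" using b fin finite_subset by auto
  show "finite (q ` b)" "finite (q ` b')" using fb by auto
  show "card (q ` b) = card (q ` b')" using c inj b by (metis card_image inj_on_subset)
  show "q m \<in> q ` b - q ` b'" using m inj b by (auto simp: inj_on_def)
  show "\<forall>x\<in>q ` b' - q ` b. q m < x" using lt by auto
qed

lemma lfb_eq:
  assumes "b0 \<in> M" and "\<forall>b'\<in>M. b' \<noteq> b0 \<longrightarrow> (pos_list \<sigma> b0, pos_list \<sigma> b') \<in> lex less_than"
  shows "lex_first_basis \<sigma> M = b0"
  unfolding lex_first_basis_def
proof (rule the_equality)
  show "b0 \<in> M \<and> (\<forall>b'\<in>M. b' \<noteq> b0 \<longrightarrow> (pos_list \<sigma> b0, pos_list \<sigma> b') \<in> lex less_than)" using assms by blast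
  fix b assume b: "b \<in> M \<and> (\<forall>b'\<in>M. b' \<noteq> b \<longrightarrow> (pos_list \<sigma> b, pos_list \<sigma> b') \<in> lex less_than)"
  show "b = b0"
  proof (rule ccontr)
    assume "b \<noteq> b0"
    then have "(pos_list \<sigma> b, pos_list \<sigma> b0) \<in> lex less_than" "(pos_list \<sigma> b0, pos_list \<sigma> b) \<in> lex less_than"
      using b assms by auto
    then show False using wf_not_sym[OF wf_lex[OF wf_less_than]] by blast
  qed
qed



lemma lookup_sum_singles:
  fixes g :: "nat \<Rightarrow> (nat \<Rightarrow>\<^sub>0 int)"
  assumes "finite B" "inj_on g B"
  shows "Poly_Mapping.lookup (\<Sum>i\<in>B. Poly_Mapping.single (g i) (1::int)) a = (if a \<in> g ` B then 1 else 0)"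
proof -
  have "Poly_Mapping.lookup (\<Sum>i\<in>B. Poly_Mapping.single (g i) (1::int)) a = (\<Sum>i\<in>B. if a = g i then 1 else 0)"
    by (simp add: lookup_sum lookup_single when_def)
  also have "\<dots> = card {i\<in>B. a = g i}" using assms(1) by (simp add: sum.If_cases Collect_conj_eq)
  also have "\<dots> = (if a \<in> g ` B then 1 else 0)"
  proof (cases "a \<in> g ` B")
    case True
    then obtain i where i: "i \<in> B" "g i = a" by blast
    then have "{i\<in>B. a = g i} = {i}" using assms(2) by (auto simp: inj_on_def)
    then show ?thesis using True by simp
  next
    case False
    then have "{i\<in>B. a = g i} = {}" by auto
    then have "card {i\<in>B. a = g i} = 0" by (metis card.empty)
    then show ?thesis using False by presburger
  qed
  finally show ?thesis .
qed

lemma keys_sum_singles: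
  fixes g :: "nat \<Rightarrow> (nat \<Rightarrow>\<^sub>0 int)"
  assumes "finite B" "inj_on g B"
  shows "Poly_Mapping.keys (\<Sum>i\<in>B. Poly_Mapping.single (g i) (1::int)) = g ` B"
  using lookup_sum_singles[OF assms] by (auto simp: in_keys_iff split: if_splits)

lemma chernT_sum_singles:
  fixes g :: "nat \<Rightarrow> (nat \<Rightarrow>\<^sub>0 int)"
  assumes "finite B" "inj_on g B"
  shows "chernT (\<Sum>i\<in>B. Poly_Mapping.single (g i) (1::int)) = (\<Prod>i\<in>B. [:1, char_c1 (g i):])"
  unfolding chernT_def keys_sum_singles[OF assms] lookup_sum_singles[OF assms]
  by (simp add: prod.reindex[OF assms(2)])

lemma lflip_sum_singles:
  fixes g :: "nat \<Rightarrow> (nat \<Rightarrow>\<^sub>0 int)"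
  assumes "finite B" "inj_on g B"
  shows "lflip (\<Sum>i\<in>B. Poly_Mapping.single (g i) (1::int)) = (\<Sum>i\<in>B. Poly_Mapping.single (- g i) (1::int))"
  unfolding lflip_def keys_sum_singles[OF assms] lookup_sum_singles[OF assms]
  by (simp add: sum.reindex[OF assms(2)])

lemma char_c1_single: "k \<noteq> 0 \<Longrightarrow> char_c1 (Poly_Mapping.single i k) = of_int k * tvar i"
  by (simp add: char_c1_def)

lemma chern_sum:
  assumes fB: "finite B"
  shows "map_poly tneg (chernT (\<Sum>i\<in>B. Tpow i (-1))) = chernT (lflip (\<Sum>i\<in>B. Tpow i (-1)))"
proof -
  define g where "g i = Poly_Mapping.single i (-1::int)" for i :: nat
  have inj: "inj_on g B" unfolding g_def
    by (rule inj_onI) (metis lookup_single_eq lookup_single_not_eq zero_neq_neg_one)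
  have inj2: "inj_on (\<lambda>i. - g i) B" using inj by (auto simp: inj_on_def)
  have T: "(\<Sum>i\<in>B. Tpow i (-1)) = (\<Sum>i\<in>B. Poly_Mapping.single (g i) (1::int))"
    by (simp add: Tpow_def g_def)
  have ng: "- g i = Poly_Mapping.single i 1" for i by (simp add: g_def single_uminus[symmetric])
  have dg1: "dg (Poly_Mapping.single i (Suc 0)) = 1" for i by (simp add: dg_def)
  have key: "map_poly tneg [:1, char_c1 (g i):] = [:1, char_c1 (- g i):]" for i
  proof -
    have "char_c1 (g i) = of_int (-1) * tvar i" unfolding g_def by (rule char_c1_single) simp
    also have "\<dots> = Poly_Mapping.single (Poly_Mapping.single i 1) (-1)"
      by (simp add: tvar_def single_uminus)
    finally have "char_c1 (g i) = Poly_Mapping.single (Poly_Mapping.single i 1) (-1)" .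
    moreover have "char_c1 (- g i) = Poly_Mapping.single (Poly_Mapping.single i 1) 1"
      by (simp add: ng char_c1_single tvar_def)
    ultimately show ?thesis
      by (simp add: map_poly_pCons tneg_0 tneg_1 tneg_single dg1)
  qed
  show ?thesis
    unfolding T lflip_sum_singles[OF fB inj] chernT_sum_singles[OF fB inj] chernT_sum_singles[OF fB inj2]
    by (simp add: map_poly_tneg_prod key)
qed

lemma inv_rev:
  assumes s: "\<sigma> permutes {0..n}" and x: "x \<le> n"
  shows "inv (rev_perm n \<sigma>) x = n - inv \<sigma> x"
proof -
  have ix: "inv \<sigma> x \<le> n"
    using permutes_in_image[OF permutes_inv[OF s], of x] x by simp
  have r: "rev_perm n \<sigma> = \<sigma> \<circ> (\<lambda>i. if i \<le> n then n - i else i)"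
    by (auto simp: rev_perm_def fun_eq_iff)
  have "inj (\<lambda>i::nat. if i \<le> n then n - i else i)"
    by (rule injI) (auto split: if_splits)
  then have inj: "inj (rev_perm n \<sigma>)" unfolding r using permutes_inj[OF s] by (rule inj_compose[rotated])
  have "rev_perm n \<sigma> (n - inv \<sigma> x) = x"
    using ix by (simp add: rev_perm_def permutes_inverses[OF s])
  then show ?thesis using inv_f_eq[OF inj] by blast
qed

lemma main_claims:
  assumes M: "matroid {0..n} M" and s: "\<sigma> permutes {0..n}"
  shows "\<exists>b0. b0 \<subseteq> {0..n} \<and> lex_first_basis (rev_perm n \<sigma>) M = b0 \<and>
      lex_first_basis \<sigma> (matroid_dual {0..n} M) = {0..n} - b0"
proof -
  let ?E = "{0..n::nat}"
  have sub: "\<And>b. b \<in> M \<Longrightarrow> b \<subseteq> ?E" using M unfolding matroid_def by blast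
  have injp: "inj_on (inv \<sigma>) ?E" using permutes_inj_on[OF permutes_inv[OF s]] .
  have ple: "\<And>x. x \<in> ?E \<Longrightarrow> inv \<sigma> x \<le> n"
    using permutes_in_image[OF permutes_inv[OF s]] by simp
  from greedy[OF M injp] obtain b0 where b0: "b0 \<in> M" and P0: "\<forall>b'\<in>M. b' \<noteq> b0 \<longrightarrow>
     (\<exists>m\<in>b0 - b'. \<forall>x\<in>b' - b0. inv \<sigma> x < inv \<sigma> m) \<and> (\<exists>m\<in>b' - b0. \<forall>x\<in>b0 - b'. inv \<sigma> m < inv \<sigma> x)" ..
  have P: "\<And>b'. b' \<in> M \<Longrightarrow> b' \<noteq> b0 \<Longrightarrow>
     (\<exists>m\<in>b0 - b'. \<forall>x\<in>b' - b0. inv \<sigma> x < inv \<sigma> m) \<and> (\<exists>m\<in>b' - b0. \<forall>x\<in>b0 - b'. inv \<sigma> m < inv \<sigma> x)"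
    using P0 by simp
  have c: "\<And>b'. b' \<in> M \<Longrightarrow> card b0 = card b'" using bases_card[OF M b0] by blast
  define q where "q x = n - inv \<sigma> x" for x
  have injq: "inj_on q ?E"
  proof (rule inj_onI)
    fix x y assume xy: "x \<in> ?E" "y \<in> ?E" "q x = q y"
    then have "inv \<sigma> x = inv \<sigma> y" using ple[of x] ple[of y] unfolding q_def by arith
    then show "x = y" using inj_onD[OF injp _ xy(1,2)] by blast
  qed
  have posrev: "\<And>b. b \<subseteq> ?E \<Longrightarrow> pos_list (rev_perm n \<sigma>) b = sorted_list_of_set (q ` b)"
  proof -
    fix b :: "nat set" assume b: "b \<subseteq> ?E"
    have "\<And>x. x \<in> b \<Longrightarrow> inv (rev_perm n \<sigma>) x = q x"
      unfolding q_def using b by (intro inv_rev[OF s]) auto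
    then have "inv (rev_perm n \<sigma>) ` b = q ` b" by (rule image_cong[OF refl])
    then show "pos_list (rev_perm n \<sigma>) b = sorted_list_of_set (q ` b)" unfolding pos_list_def by simp
  qed
  have c1: "lex_first_basis (rev_perm n \<sigma>) M = b0"
  proof (rule lfb_eq[OF b0], intro ballI impI)
    fix b' assume b': "b' \<in> M" "b' \<noteq> b0"
    obtain m where m: "m \<in> b0 - b'" "\<forall>x\<in>b' - b0. inv \<sigma> x < inv \<sigma> m" using P[OF b'] by blast
    have "q m < q x" if x: "x \<in> b' - b0" for x
    proof -
      have "x \<in> ?E" "m \<in> ?E" using x m(1) sub[OF b0] sub[OF b'(1)] by auto
      then have "inv \<sigma> x \<le> n" "inv \<sigma> m \<le> n" using ple by auto
      moreover have "inv \<sigma> x < inv \<sigma> m" using m(2) x by blast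
      ultimately show ?thesis unfolding q_def by arith
    qed
    then have "\<forall>x\<in>b' - b0. q m < q x" by blast
    then show "(pos_list (rev_perm n \<sigma>) b0, pos_list (rev_perm n \<sigma>) b') \<in> lex less_than"
      unfolding posrev[OF sub[OF b0]] posrev[OF sub[OF b'(1)]]
      using image_lex[OF _ injq sub[OF b0] sub[OF b'(1)] c[OF b'(1)] m(1)] by simp
  qed
  have c2: "lex_first_basis \<sigma> (matroid_dual ?E M) = ?E - b0"
  proof (rule lfb_eq, unfold matroid_dual_def)
    show "?E - b0 \<in> (\<lambda>b. ?E - b) ` M" using b0 by blast
    show "\<forall>b''\<in>(\<lambda>b. ?E - b) ` M. b'' \<noteq> ?E - b0 \<longrightarrow> (pos_list \<sigma> (?E - b0), pos_list \<sigma> b'') \<in> lex less_than"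
    proof (intro ballI impI)
      fix b'' assume "b'' \<in> (\<lambda>b. ?E - b) ` M" "b'' \<noteq> ?E - b0"
      then obtain b' where b': "b' \<in> M" "b'' = ?E - b'" "b' \<noteq> b0" by blast
      obtain m where m: "m \<in> b' - b0" "\<forall>x\<in>b0 - b'. inv \<sigma> m < inv \<sigma> x" using P[OF b'(1) b'(3)] by blast
      have cc: "card (?E - b0) = card (?E - b')"
        using c[OF b'(1)] sub[OF b0] sub[OF b'(1)] by (simp add: card_Diff_subset finite_subset)
      have m1: "m \<in> (?E - b0) - (?E - b')" using m sub[OF b'(1)] by blast
      have m2: "\<forall>x\<in>(?E - b') - (?E - b0). inv \<sigma> m < inv \<sigma> x" using m sub[OF b0] by blast
      show "(pos_list \<sigma> (?E - b0), pos_list \<sigma> b'') \<in> lex less_than"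
        unfolding pos_list_def b'(2)
        using image_lex[OF _ injp _ _ cc m1 m2] by simp
    qed
  qed
  show ?thesis using c1 c2 sub[OF b0] by blast
qed

theorem proposition5p11:
  fixes n :: nat and M :: "nat set set"
  assumes "matroid {0..n} M"
  shows "Keq n (crem n (S_class n M)) (kdual (Q_class n (matroid_dual {0..n} M)))
       \<and> Keq n (crem n (Q_class n M)) (kdual (S_class n (matroid_dual {0..n} M)))
       \<and> Ceq n (crem_chow n (chern_class (S_class n M)))
              (chern_class (kdual (Q_class n (matroid_dual {0..n} M))))
       \<and> Ceq n (crem_chow n (chern_class (Q_class n M)))
              (chern_class (kdual (S_class n (matroid_dual {0..n} M))))"
  unfolding Keq_def Ceq_def
proof (intro conjI allI impI)
  fix \<sigma> assume s: "\<sigma> permutes {0..n}"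
  obtain b0 where b0: "b0 \<subseteq> {0..n}" and e1: "lex_first_basis (rev_perm n \<sigma>) M = b0"
    and e2: "lex_first_basis \<sigma> (matroid_dual {0..n} M) = {0..n} - b0"
    using main_claims[OF assms s] by blast
  have dd: "{0..n} - ({0..n} - b0) = b0" using b0 by blast
  have fb: "finite b0" using b0 finite_subset by blast
  show "crem n (S_class n M) \<sigma> = kdual (Q_class n (matroid_dual {0..n} M)) \<sigma>"
    by (simp add: crem_def kdual_def S_class_def Q_class_def e1 e2 dd)
  show "crem n (Q_class n M) \<sigma> = kdual (S_class n (matroid_dual {0..n} M)) \<sigma>"
    by (simp add: crem_def kdual_def S_class_def Q_class_def e1 e2)
  show "crem_chow n (chern_class (S_class n M)) \<sigma> = chern_class (kdual (Q_class n (matroid_dual {0..n} M))) \<sigma>"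
    by (simp add: crem_chow_def chern_class_def kdual_def S_class_def Q_class_def e1 e2 dd chern_sum[OF fb])
  show "crem_chow n (chern_class (Q_class n M)) \<sigma> = chern_class (kdual (S_class n (matroid_dual {0..n} M))) \<sigma>"
    by (simp add: crem_chow_def chern_class_def kdual_def S_class_def Q_class_def e1 e2 chern_sum)
qed

end
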